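(* Let $R$ be an NJ-symmetric ring and let $M$ be a maximal left ideal of $R$ which is not essential (as a left ideal). Then $M$ is a two-sided ideal of $R$. Likewise, if $M$ is a maximal right ideal of $R$ which is not essential (as a right ideal), then $M$ is a two-sided ideal of $R$.
   Context: Rings are associative with identity. $N(R)$ is the set of nilpotent elements, $J(R)$ the Jacobson radical. $R$ is NJ-symmetric if for all $a,b,c\in R$, $abc\in N(R)$ implies $bac\in J(R)$. *)

theory Defs
  imports Main
begin

definition nilpotents :: "'a::ring_1 set" where
  "nilpotents = {a. \<exists>n::nat. a ^ n = 0}"

definition left_ideal :: "'a::ring_1 set \<Rightarrow> bool" where
  "left_ideal I \<longleftrightarrow> 0 \<in> I \<and> (\<forall>x\<in>I. \<forall>y\<in>I. x + y \<in> I) \<and> (\<forall>x\<in>I. - x \<in> I)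
     \<and> (\<forall>r x. x \<in> I \<longrightarrow> r * x \<in> I)"

definition right_ideal :: "'a::ring_1 set \<Rightarrow> bool" where
  "right_ideal I \<longleftrightarrow> 0 \<in> I \<and> (\<forall>x\<in>I. \<forall>y\<in>I. x + y \<in> I) \<and> (\<forall>x\<in>I. - x \<in> I)
     \<and> (\<forall>r x. x \<in> I \<longrightarrow> x * r \<in> I)"

definition two_sided_ideal :: "'a::ring_1 set \<Rightarrow> bool" where
  "two_sided_ideal I \<longleftrightarrow> left_ideal I \<and> right_ideal I"

definition maximal_left_ideal :: "'a::ring_1 set \<Rightarrow> bool" where
  "maximal_left_ideal M \<longleftrightarrow> left_ideal M \<and> M \<noteq> UNIV \<and>
     (\<forall>I. left_ideal I \<and> M \<subseteq> I \<and> I \<noteq> UNIV \<longrightarrow> I = M)"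

definition maximal_right_ideal :: "'a::ring_1 set \<Rightarrow> bool" where
  "maximal_right_ideal M \<longleftrightarrow> right_ideal M \<and> M \<noteq> UNIV \<and>
     (\<forall>I. right_ideal I \<and> M \<subseteq> I \<and> I \<noteq> UNIV \<longrightarrow> I = M)"

definition jacobson :: "'a::ring_1 set" where
  "jacobson = \<Inter> {M. maximal_left_ideal M}"

definition NJ_symmetric :: "'a::ring_1 itself \<Rightarrow> bool" where
  "NJ_symmetric _ \<longleftrightarrow> (\<forall>a b c :: 'a. a * b * c \<in> nilpotents \<longrightarrow> b * a * c \<in> jacobson)"

definition essential_left_ideal :: "'a::ring_1 set \<Rightarrow> bool" where
  "essential_left_ideal M \<longleftrightarrow> left_ideal M \<and>
     (\<forall>L. left_ideal L \<and> L \<noteq> {0} \<longrightarrow> M \<inter> L \<noteq> {0})"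

definition essential_right_ideal :: "'a::ring_1 set \<Rightarrow> bool" where
  "essential_right_ideal M \<longleftrightarrow> right_ideal M \<and>
     (\<forall>L. right_ideal L \<and> L \<noteq> {0} \<longrightarrow> M \<inter> L \<noteq> {0})"

end

theory Submission
  imports Defs
begin

lemma left_ideal_one: "left_ideal (K::'a::ring_1 set) \<Longrightarrow> 1 \<in> K \<Longrightarrow> K = UNIV"
  unfolding left_ideal_def by (metis UNIV_eq_I mult.right_neutral)

lemma right_ideal_one: "right_ideal (K::'a::ring_1 set) \<Longrightarrow> 1 \<in> K \<Longrightarrow> K = UNIV"
  unfolding right_ideal_def by (metis UNIV_eq_I mult_1)

lemma chain_union_left_ideal:
  assumes C: "C \<in> chains {K::'a::ring_1 set. left_ideal K \<and> I \<subseteq> K \<and> 1 \<notin> K}" and ne: "C \<noteq> {}"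
  shows "left_ideal (\<Union>C)"
proof -
  have sub: "\<And>K. K \<in> C \<Longrightarrow> left_ideal K" using C by (auto simp: chains_def)
  have ch: "\<And>X Y. X \<in> C \<Longrightarrow> Y \<in> C \<Longrightarrow> X \<subseteq> Y \<or> Y \<subseteq> X"
    using C by (auto simp: chains_def chain_subset_def)
  show ?thesis unfolding left_ideal_def
  proof (intro conjI ballI allI impI)
    show "0 \<in> \<Union>C" using ne sub unfolding left_ideal_def by blast
  next
    fix x y assume "x \<in> \<Union>C" "y \<in> \<Union>C"
    then obtain X Y where X: "X \<in> C" "x \<in> X" and Y: "Y \<in> C" "y \<in> Y" by blast
    from ch[OF X(1) Y(1)] show "x + y \<in> \<Union>C"
    proof
      assume "X \<subseteq> Y" then show ?thesis using sub[OF Y(1)] X Y unfolding left_ideal_def by blast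
    next
      assume "Y \<subseteq> X" then show ?thesis using sub[OF X(1)] X Y unfolding left_ideal_def by blast
    qed
  next
    fix x assume "x \<in> \<Union>C" then show "- x \<in> \<Union>C" using sub unfolding left_ideal_def by blast
  next
    fix r x assume "x \<in> \<Union>C" then show "r * x \<in> \<Union>C" using sub unfolding left_ideal_def by blast
  qed
qed

lemma jacobson_left_inv:
  assumes z: "(z::'a::ring_1) \<in> jacobson"
  shows "\<exists>u. u * (1 - z) = 1"
proof (rule ccontr)
  assume nz: "\<not> (\<exists>u. u * (1 - z) = 1)"
  define I where "I = {r * (1 - z) | r. True}"
  define A where "A = {K::'a set. left_ideal K \<and> I \<subseteq> K \<and> 1 \<notin> K}"
  have LI: "left_ideal I" unfolding left_ideal_def I_def
  proof (intro conjI ballI allI impI)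
    show "0 \<in> {r * (1 - z) |r. True}" by (metis (mono_tags, lifting) mem_Collect_eq mult_zero_left)
  next
    fix x y assume "x \<in> {r * (1 - z) |r. True}" "y \<in> {r * (1 - z) |r. True}"
    then obtain a b where "x = a * (1 - z)" "y = b * (1 - z)" by blast
    then have "x + y = (a + b) * (1 - z)" by (simp add: distrib_right)
    then show "x + y \<in> {r * (1 - z) |r. True}" by blast
  next
    fix x assume "x \<in> {r * (1 - z) |r. True}"
    then obtain a where "x = a * (1 - z)" by blast
    then have "- x = (- a) * (1 - z)" by simp
    then show "- x \<in> {r * (1 - z) |r. True}" by blast
  next
    fix r x assume "x \<in> {r * (1 - z) |r. True}"
    then obtain a where "x = a * (1 - z)" by blast
    then have "r * x = (r * a) * (1 - z)" by (simp add: mult.assoc)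
    then show "r * x \<in> {r * (1 - z) |r. True}" by blast
  qed
  have "I \<in> A" unfolding A_def using LI nz I_def by auto
  have "\<forall>C\<in>chains A. \<exists>U\<in>A. \<forall>X\<in>C. X \<subseteq> U"
  proof
    fix C assume C: "C \<in> chains A"
    show "\<exists>U\<in>A. \<forall>X\<in>C. X \<subseteq> U"
    proof (cases "C = {}")
      case True then show ?thesis using \<open>I \<in> A\<close> by blast
    next
      case False
      have "left_ideal (\<Union>C)" using chain_union_left_ideal[of C I] C False unfolding A_def by blast
      moreover have "I \<subseteq> \<Union>C" "1 \<notin> \<Union>C" using C False unfolding A_def chains_def by blast+
      ultimately show ?thesis unfolding A_def by blast
    qed
  qed
  from Zorn_Lemma2[OF this] obtain N where N: "N \<in> A" and mx: "\<forall>X\<in>A. N \<subseteq> X \<longrightarrow> X = N" by blast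
  have "maximal_left_ideal N" unfolding maximal_left_ideal_def
  proof (intro conjI allI impI)
    show "left_ideal N" using N A_def by blast
    show "N \<noteq> UNIV" using N A_def by blast
    fix K assume K: "left_ideal K \<and> N \<subseteq> K \<and> K \<noteq> UNIV"
    then have "1 \<notin> K" using left_ideal_one by blast
    then have "K \<in> A" using K N unfolding A_def by blast
    then show "K = N" using mx K by blast
  qed
  then have "z \<in> N" using z unfolding jacobson_def by blast
  have "1 * (1 - z) \<in> I" unfolding I_def by blast
  then have "1 * (1 - z) \<in> N" using N unfolding A_def by blast
  then have "1 - z \<in> N" by simp
  have LN: "left_ideal N" using N unfolding A_def by blast
  have "z + (1 - z) \<in> N" using LN \<open>z \<in> N\<close> \<open>1 - z \<in> N\<close> unfolding left_ideal_def by blast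
  then have "1 \<in> N" by simp
  then show False using N A_def by blast
qed

lemma left_part:
  assumes NJ: "NJ_symmetric TYPE('a::ring_1)"
    and M: "maximal_left_ideal (M::'a set)" and ne: "\<not> essential_left_ideal M"
  shows "two_sided_ideal M"
proof -
  have LM: "left_ideal M" and MU: "M \<noteq> UNIV" and mx: "\<And>I. left_ideal I \<Longrightarrow> M \<subseteq> I \<Longrightarrow> I \<noteq> UNIV \<Longrightarrow> I = M"
    using M unfolding maximal_left_ideal_def by auto
  obtain L where L: "left_ideal L" "L \<noteq> {0}" "M \<inter> L = {0}"
    using ne LM unfolding essential_left_ideal_def by blast
  have L0: "0 \<in> L" using L(1) unfolding left_ideal_def by blast
  obtain l where l: "l \<in> L" "l \<noteq> 0" using L L0 by blast
  have lM: "l \<notin> M" using l L by blast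
  define S where "S = {m + k | m k. m \<in> M \<and> k \<in> L}"
  have LS: "left_ideal S" unfolding left_ideal_def S_def
  proof (intro conjI ballI allI impI)
    show "0 \<in> {m + k |m k. m \<in> M \<and> k \<in> L}" using LM L0 unfolding left_ideal_def by force
  next
    fix x y assume "x \<in> {m + k |m k. m \<in> M \<and> k \<in> L}" "y \<in> {m + k |m k. m \<in> M \<and> k \<in> L}"
    then obtain a b c d where "x = a + b" "y = c + d" "a \<in> M" "b \<in> L" "c \<in> M" "d \<in> L" by blast
    moreover have "x + y = (a + c) + (b + d)" using calculation by (simp add: algebra_simps)
    ultimately show "x + y \<in> {m + k |m k. m \<in> M \<and> k \<in> L}" using LM L(1) unfolding left_ideal_def by blast
  next
    fix x assume "x \<in> {m + k |m k. m \<in> M \<and> k \<in> L}"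
    then obtain a b where "x = a + b" "a \<in> M" "b \<in> L" by blast
    moreover have "- x = (- a) + (- b)" using calculation by simp
    ultimately show "- x \<in> {m + k |m k. m \<in> M \<and> k \<in> L}" using LM L(1) unfolding left_ideal_def by blast
  next
    fix r x assume "x \<in> {m + k |m k. m \<in> M \<and> k \<in> L}"
    then obtain a b where "x = a + b" "a \<in> M" "b \<in> L" by blast
    moreover have "r * x = r * a + r * b" using calculation by (simp add: distrib_left)
    ultimately show "r * x \<in> {m + k |m k. m \<in> M \<and> k \<in> L}" using LM L(1) unfolding left_ideal_def by blast
  qed
  have "M \<subseteq> S" unfolding S_def using L0 by force
  moreover have "l \<in> S" unfolding S_def using LM l unfolding left_ideal_def by force
  ultimately have "S = UNIV" using mx[OF LS] lM by blast
  then obtain e f where ef: "1 = e + f" "e \<in> M" "f \<in> L" unfolding S_def by blast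
  have fe: "f * e = 0"
  proof -
    have "f * e \<in> M" using LM ef unfolding left_ideal_def by blast
    moreover have "f * e = f - f * f" using ef by (metis add_diff_cancel_right' distrib_left mult.right_neutral)
    moreover have "f - f * f \<in> L" using L(1) ef unfolding left_ideal_def by (metis diff_conv_add_uminus)
    ultimately have "f * e \<in> M \<inter> L" by simp
    then show ?thesis using L(3) by blast
  qed
  have inM: "\<And>x. x \<in> M \<Longrightarrow> x * f = 0"
  proof -
    fix x assume x: "x \<in> M"
    have "x * f \<in> L" using L(1) ef unfolding left_ideal_def by blast
    moreover have "x * f = x - x * e" using ef by (metis add_diff_cancel_left' distrib_left mult.right_neutral)
    moreover have "x - x * e \<in> M" using LM ef x unfolding left_ideal_def by (metis diff_conv_add_uminus)
    ultimately have "x * f \<in> M \<inter> L" by simp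
    then show "x * f = 0" using L(3) by blast
  qed
  have toM: "\<And>x. x * f = 0 \<Longrightarrow> x \<in> M"
  proof -
    fix x assume "x * f = 0"
    then have "x = x * e" using ef by (metis add.right_neutral distrib_left mult.right_neutral)
    then show "x \<in> M" using LM ef unfolding left_ideal_def by metis
  qed
  have erf: "\<And>r. e * r * f = 0"
  proof -
    fix r
    have "(e * r * f) ^ 2 = e * r * (f * e) * r * f" by (simp add: power2_eq_square mult.assoc)
    then have "(e * r * f) ^ 2 = 0" using fe by simp
    then have "1 * (e * r * f) * 1 \<in> nilpotents" unfolding nilpotents_def by auto
    then have "e * r * f * 1 * 1 \<in> jacobson" using NJ unfolding NJ_symmetric_def by blast
    then have "e * r * f \<in> M" using M unfolding jacobson_def by auto
    moreover have "e * r * f \<in> L" using L(1) ef unfolding left_ideal_def by blast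
    ultimately show "e * r * f = 0" using L(3) by auto
  qed
  have "right_ideal M" unfolding right_ideal_def
  proof (intro conjI allI impI)
    show "0 \<in> M" "\<forall>x\<in>M. \<forall>y\<in>M. x + y \<in> M" "\<forall>x\<in>M. - x \<in> M" using LM unfolding left_ideal_def by auto
    fix r x assume x: "x \<in> M"
    have "x = x * e" using inM[OF x] ef by (metis add.right_neutral distrib_left mult.right_neutral)
    then have "x * r * f = x * (e * r * f)" by (metis mult.assoc)
    then have "x * r * f = 0" using erf by simp
    then show "x * r \<in> M" using toM by blast
  qed
  then show ?thesis using LM unfolding two_sided_ideal_def by blast
qed

lemma right_part:
  assumes NJ: "NJ_symmetric TYPE('a::ring_1)"
    and M: "maximal_right_ideal (M::'a set)" and ne: "\<not> essential_right_ideal M"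
  shows "two_sided_ideal M"
proof -
  have LM: "right_ideal M" and MU: "M \<noteq> UNIV" and mx: "\<And>I. right_ideal I \<Longrightarrow> M \<subseteq> I \<Longrightarrow> I \<noteq> UNIV \<Longrightarrow> I = M"
    using M unfolding maximal_right_ideal_def by auto
  obtain L where L: "right_ideal L" "L \<noteq> {0}" "M \<inter> L = {0}"
    using ne LM unfolding essential_right_ideal_def by blast
  have L0: "0 \<in> L" using L(1) unfolding right_ideal_def by blast
  have sumI: "\<And>K::'a set. right_ideal K \<Longrightarrow> right_ideal {m + k | m k. m \<in> M \<and> k \<in> K}"
  proof -
    fix K :: "'a set" assume K: "right_ideal K"
    show "right_ideal {m + k | m k. m \<in> M \<and> k \<in> K}" unfolding right_ideal_def
    proof (intro conjI ballI allI impI)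
      have "(0::'a) \<in> M" "(0::'a) \<in> K" using LM K unfolding right_ideal_def by blast+
      then have "0 + 0 \<in> {m + k |m k. m \<in> M \<and> k \<in> K}" by blast
      then show "0 \<in> {m + k |m k. m \<in> M \<and> k \<in> K}" by simp
    next
      fix x y assume "x \<in> {m + k |m k. m \<in> M \<and> k \<in> K}" "y \<in> {m + k |m k. m \<in> M \<and> k \<in> K}"
      then obtain a b c d where "x = a + b" "y = c + d" "a \<in> M" "b \<in> K" "c \<in> M" "d \<in> K" by blast
      moreover have "x + y = (a + c) + (b + d)" using calculation by (simp add: algebra_simps)
      ultimately show "x + y \<in> {m + k |m k. m \<in> M \<and> k \<in> K}" using LM K unfolding right_ideal_def by blast
    next
      fix x assume "x \<in> {m + k |m k. m \<in> M \<and> k \<in> K}"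
      then obtain a b where "x = a + b" "a \<in> M" "b \<in> K" by blast
      moreover have "- x = (- a) + (- b)" using calculation by simp
      ultimately show "- x \<in> {m + k |m k. m \<in> M \<and> k \<in> K}" using LM K unfolding right_ideal_def by blast
    next
      fix r x assume "x \<in> {m + k |m k. m \<in> M \<and> k \<in> K}"
      then obtain a b where "x = a + b" "a \<in> M" "b \<in> K" by blast
      moreover have "x * r = a * r + b * r" using calculation by (simp add: distrib_right)
      ultimately show "x * r \<in> {m + k |m k. m \<in> M \<and> k \<in> K}" using LM K unfolding right_ideal_def by blast
    qed
  qed
  have full: "\<And>(K::'a set) l. right_ideal K \<Longrightarrow> l \<in> K \<Longrightarrow> l \<notin> M \<Longrightarrow> \<exists>m k. 1 = m + k \<and> m \<in> M \<and> k \<in> K"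
  proof -
    fix K :: "'a set" and l assume K: "right_ideal K" "l \<in> K" "l \<notin> M"
    have K0: "0 \<in> K" using K unfolding right_ideal_def by blast
    have a1: "M \<subseteq> {m + k | m k. m \<in> M \<and> k \<in> K}" using K0 by force
    have a2: "l \<in> {m + k | m k. m \<in> M \<and> k \<in> K}"
    proof -
      have "0 + l \<in> {m + k | m k. m \<in> M \<and> k \<in> K}" using LM K unfolding right_ideal_def by blast
      then show ?thesis by simp
    qed
    have "{m + k | m k. m \<in> M \<and> k \<in> K} = UNIV"
    proof (rule ccontr)
      assume "{m + k | m k. m \<in> M \<and> k \<in> K} \<noteq> UNIV"
      then have "{m + k | m k. m \<in> M \<and> k \<in> K} = M" using mx[OF sumI[OF K(1)] a1] by blast
      then show False using a2 K(3) by blast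
    qed
    then have "1 \<in> {m + k | m k. m \<in> M \<and> k \<in> K}" by simp
    then show "\<exists>m k. 1 = m + k \<and> m \<in> M \<and> k \<in> K" by blast
  qed
  obtain l where l: "l \<in> L" "l \<noteq> 0" using L L0 by blast
  have lM: "l \<notin> M" using l L by blast
  obtain e f where ef: "1 = e + f" "e \<in> M" "f \<in> L" using full[OF L(1) l(1) lM] by blast
  have fe: "f * e = 0"
  proof -
    have "f * e \<in> L" using L(1) ef unfolding right_ideal_def by blast
    moreover have "f * e = e - e * e" using ef by (metis add_diff_cancel_left' distrib_right mult_1)
    moreover have "e - e * e \<in> M" using LM ef unfolding right_ideal_def by (metis diff_conv_add_uminus)
    ultimately have "f * e \<in> M \<inter> L" by simp
    then show ?thesis using L(3) by blast
  qed
  have ef0: "e * f = 0"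
  proof -
    have "e * f \<in> M" using LM ef unfolding right_ideal_def by blast
    moreover have "e * f = f - f * f" using ef by (metis add_diff_cancel_right' distrib_right mult_1)
    moreover have "f - f * f \<in> L" using L(1) ef unfolding right_ideal_def by (metis diff_conv_add_uminus)
    ultimately have "e * f \<in> M \<inter> L" by simp
    then show ?thesis using L(3) by blast
  qed
  have ff: "f * f = f" using ef ef0 by (metis add_0 distrib_right mult_1)
  have f0: "f \<noteq> 0"
  proof
    assume "f = 0" then have "1 \<in> M" using ef by simp
    then show False using right_ideal_one[OF LM] MU by blast
  qed
  have inM: "\<And>x. x \<in> M \<Longrightarrow> f * x = 0"
  proof -
    fix x assume x: "x \<in> M"
    have "f * x \<in> L" using L(1) ef unfolding right_ideal_def by blast
    moreover have "f * x = x - e * x" using ef by (metis add_diff_cancel_left' distrib_right mult_1)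
    moreover have "x - e * x \<in> M" using LM ef x unfolding right_ideal_def by (metis diff_conv_add_uminus)
    ultimately have "f * x \<in> M \<inter> L" by simp
    then show "f * x = 0" using L(3) by blast
  qed
  have fre: "\<And>r. f * r * e = 0"
  proof (rule ccontr)
    fix r assume y0: "f * r * e \<noteq> 0"
    have yL: "f * r * e \<in> L" using L(1) ef unfolding right_ideal_def by (metis mult.assoc)
    then have yM: "f * r * e \<notin> M" using y0 L(3) by blast
    define K where "K = {f * r * e * t | t. True}"
    have K: "right_ideal K" unfolding right_ideal_def K_def
    proof (intro conjI ballI allI impI)
      show "0 \<in> {f * r * e * t |t. True}" by (metis (mono_tags, lifting) mem_Collect_eq mult_zero_right)
    next
      fix x y assume "x \<in> {f * r * e * t |t. True}" "y \<in> {f * r * e * t |t. True}"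
      then obtain a b where "x = f * r * e * a" "y = f * r * e * b" by blast
      then have "x + y = f * r * e * (a + b)" by (simp add: distrib_left)
      then show "x + y \<in> {f * r * e * t |t. True}" by blast
    next
      fix x assume "x \<in> {f * r * e * t |t. True}"
      then obtain a where "x = f * r * e * a" by blast
      then have "- x = f * r * e * (- a)" by simp
      then show "- x \<in> {f * r * e * t |t. True}" by blast
    next
      fix s x assume "x \<in> {f * r * e * t |t. True}"
      then obtain a where "x = f * r * e * a" by blast
      then have "x * s = f * r * e * (a * s)" by (simp add: mult.assoc)
      then show "x * s \<in> {f * r * e * t |t. True}" by blast
    qed
    have "f * r * e \<in> K" unfolding K_def by (metis (mono_tags, lifting) mem_Collect_eq mult.right_neutral)
    from full[OF K this yM] obtain m t where mt: "1 = m + f * r * e * t" "m \<in> M" unfolding K_def by blast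
    have h1: "f = f * m + f * (f * r * e * t)" using mt by (metis distrib_left mult.right_neutral)
    have h2: "f * (f * r * e * t) = (f * f) * r * e * t" by (simp add: mult.assoc)
    have h3: "f * (f * r * e * t) = f * r * (e * t)" using h2 ff by (simp add: mult.assoc)
    have feq: "f = f * r * (e * t)" using h1 h3 inM[OF mt(2)] by simp
    have "r * f * (e * t) = r * (f * e) * t" by (simp add: mult.assoc)
    then have "r * f * (e * t) = 0" using fe by simp
    then have "(r * f * (e * t)) ^ 1 = 0" by simp
    then have "r * f * (e * t) \<in> nilpotents" unfolding nilpotents_def by blast
    then have "f * r * (e * t) \<in> jacobson" using NJ unfolding NJ_symmetric_def by blast
    then have "f \<in> jacobson" using feq by simp
    from jacobson_left_inv[OF this] obtain u where u: "u * (1 - f) = 1" by blast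
    have "1 - f = e" using ef add_diff_cancel_right'[of e f] by simp
    then have "u * e = 1" using u by simp
    then have "f = u * e * f" by simp
    then have "f = 0" using ef0 by (simp add: mult.assoc)
    then show False using f0 by blast
  qed
  have "left_ideal M" unfolding left_ideal_def
  proof (intro conjI allI impI)
    show "0 \<in> M" "\<forall>x\<in>M. \<forall>y\<in>M. x + y \<in> M" "\<forall>x\<in>M. - x \<in> M" using LM unfolding right_ideal_def by auto
    fix r x assume x: "x \<in> M"
    have "x = e * x" using inM[OF x] ef by (metis add.right_neutral distrib_right mult_1)
    then have "r * x = (e + f) * r * e * x" using ef by (metis mult.assoc mult_1)
    also have "\<dots> = e * (r * e * x) + f * r * e * x" by (simp add: distrib_right mult.assoc)
    also have "\<dots> = e * (r * e * x)" using fre by simp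
    finally show "r * x \<in> M" using LM ef unfolding right_ideal_def by metis
  qed
  then show ?thesis using LM unfolding two_sided_ideal_def by blast
qed

theorem lemma2p7:
  assumes "NJ_symmetric TYPE('a::ring_1)"
  shows "(\<forall>M :: 'a set. maximal_left_ideal M \<and> \<not> essential_left_ideal M \<longrightarrow> two_sided_ideal M)
       \<and> (\<forall>M :: 'a set. maximal_right_ideal M \<and> \<not> essential_right_ideal M \<longrightarrow> two_sided_ideal M)"
  using left_part[OF assms] right_part[OF assms] by blast

end
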